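(* Every triple in $V(\mathfrak{B})$ is a permutation of one of the following six triples, for some distinct $u,v,w\in U(\mathfrak{B})$. (i) $\langle u,v,w\rangle$ where $\{\langle u,v\rangle,\langle u,w\rangle\}=\Xi(u)$ and $\langle v,w\rangle$ is a $\Xi$-pair, (ii) $\langle u,v,w\rangle$ where $\{\langle u,v\rangle,\langle u,w\rangle\}=\Xi(u)$, and $\langle v,w\rangle$ is a base-pair, (iii) $\langle u,v,w\rangle$ where $\langle u,v\rangle$, $\langle u,w\rangle$, and $\langle v,w\rangle$ are base-pairs, (iv) $\langle u,u,v\rangle$ where $\langle u,v\rangle$ is a $\Xi$-pair, (v) $\langle u,u,v\rangle$ where $\langle u,v\rangle$ is a base-pair, (vi) $\langle u,u,u\rangle$.
   Context: Let $\mathfrak{A}=\langle A,+,\overline{\phantom{x}},;,\breve{\phantom{x}},1'\rangle$ be a complete atomic weakly associative relation algebra with set of atoms $\mathsf{At}\,\mathfrak{A}$, and let $0'=\overline{1'}$. Its suitable structure is $\mathfrak{B}=\langle B,T_\kappa,E_{\kappa\lambda}\rangle_{\kappa,\lambda<3}$, where $B=\{s\in{}^3\mathsf{At}\,\mathfrak{A}: s_2;s_0\geq s_1\}$, $T_\kappa=\{\langle s,t\rangle: s_\kappa=t_\kappa\}$, $E_{\kappa\kappa}=B$, and $E_{\kappa\lambda}=E_{\lambda\kappa}=\{s\in B: s_\mu\leq 1'\}$ whenever $\{\kappa,\lambda,\mu\}=\{0,1,2\}$. $\mathrm{Tr}(\mathfrak{B})$ is the set of all sequences (trails) $p=\langle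 t_0,\kappa_0,\dots,t_n,\kappa_n\rangle$ with $n\in\omega$, $t_0,\dots,t_n\in B$, $\kappa_0,\dots,\kappa_n<3$, and $t_i\neq t_{i+1}$, $t_i\,T_{\kappa_i}\,t_{i+1}$ for all $i<n$; $\kappa_n$ is the pointer of $p$ and $|p|=n+1$ its length. For $\lambda<3$, $p\lambda=\langle t_0,\kappa_0,\dots,t_{n-1},\kappa_{n-1},t_n,\lambda\rangle$. $p$ is reduced if: (a) if $|p|=1$ and $t_0\in E_{\kappa_0\lambda}$ then $\kappa_0\leq\lambda<3$; (b) if $|p|>1$ then $\kappa_{n-1}=\kappa_n$ and for all $\lambda<3$, $t_n\in E_{\kappa_n\lambda}$ iff $\kappa_n=\lambda$; (c) if $0\leq i<|p|-2$ then $t_i\neq t_{i+2}$ or $\kappa_i\neq\kappa_{i+1}$. $\approx$ is the smallest equivalence relation on $\mathrm{Tr}(\mathfrak{B})$ such that (1) $\langle t_0,\kappa_0,\dots,t_i,\lambda,s,\lambda,t_i,\kappa_i,\dots,t_n,\kappa_n\rangle\approx\langle t_0,\kappa_0,\dots,t_i,\kappa_i,\dots,t_n,\kappa_n\rangle$; (2) $\langle t_0,\kappa_0,\dots,t_n,\lambda,s,\kappa_n\rangle\approx\langle t_0,\kappa_0,\dots,t_n,\kappa_n\rangle$ where $\lambda\neq\kappa_n$; (3) $\langle t_0,\kappa_0,\dots,t_n,\lambda\rangle\approx\langle t_0,\kappa_0,\dots,t_n,\kappa_n\rangle$ where $t_n\in E_{\lambda\kappa_n}$. $p^{\mathfrak{B}}$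 is the $\approx$-class of $p$; each class contains a unique reduced trail. $U(\mathfrak{B})=\{p^{\mathfrak{B}}:p\in\mathrm{Tr}(\mathfrak{B})\}$, and for $u\in U(\mathfrak{B})$, $|u|$ is the length of the unique reduced trail in $u$. $V(\mathfrak{B})=\{\langle (p0)^{\mathfrak{B}},(p1)^{\mathfrak{B}},(p2)^{\mathfrak{B}}\rangle: p\in\mathrm{Tr}(\mathfrak{B})\}$ (the triples of trails). For $u\in U(\mathfrak{B})$: if $|u|=1$ then $\Xi(u)=\emptyset$; if $|u|>1$ then $\Xi(u)=\{\langle u,(p\lambda)^{\mathfrak{B}}\rangle,\langle u,(p\mu)^{\mathfrak{B}}\rangle\}$ where $p$ is the unique reduced trail in $u$, $\kappa$ is the pointer of $p$, and $\{\kappa,\lambda,\mu\}=\{0,1,2\}$. A pair $\langle u,v\rangle$ of points is a $\Xi$-pair if $\langle u,v\rangle\in\Xi(u)$ or $\langle v,u\rangle\in\Xi(v)$, and a base-pair if it belongs to $\{\langle (\langle t,\kappa\rangle)^{\mathfrak{B}},(\langle t,\lambda\rangle)^{\mathfrak{B}}\rangle: t\in B,\ t_\mu\leq 0',\ \{\kappa,\lambda,\mu\}=\{0,1,2\}\}$. *)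

theory Defs
  imports Main
begin

text \<open>The Boolean reduct is given by the type class (sup = +, uminus = complement,
  top = 1, bot = 0). cmp = relative product ;, conv = converse, e = identity 1'.
  Axioms R5--R10 of Tarski/Maddux without associativity (i.e. NA), plus the
  weak associativity law ((1' . x);1);1 = (1' . x);(1;1).\<close>

definition WA :: "('a::boolean_algebra \<Rightarrow> 'a \<Rightarrow> 'a) \<Rightarrow> ('a \<Rightarrow> 'a) \<Rightarrow> 'a \<Rightarrow> bool" where
  "WA cmp conv e \<longleftrightarrow>
     (\<forall>x. cmp x e = x) \<and>
     (\<forall>x. conv (conv x) = x) \<and>
     (\<forall>x y. conv (cmp x y) = cmp (conv y) (conv x)) \<and>
     (\<forall>x y z. cmp (sup x y) z = sup (cmp x z) (cmp y z)) \<and>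
     (\<forall>x y. conv (sup x y) = sup (conv x) (conv y)) \<and>
     (\<forall>x y. sup (cmp (conv x) (- cmp x y)) (- y) = - y) \<and>
     (\<forall>x. cmp (cmp (inf e x) top) top = cmp (inf e x) (cmp top top))"

definition atom :: "'a::boolean_algebra \<Rightarrow> bool" where
  "atom a \<longleftrightarrow> a \<noteq> bot \<and> (\<forall>b. b \<le> a \<longrightarrow> b = bot \<or> b = a)"

definition atomic_ba :: "'a::boolean_algebra itself \<Rightarrow> bool" where
  "atomic_ba _ \<longleftrightarrow> (\<forall>x::'a. x \<noteq> bot \<longrightarrow> (\<exists>a. atom a \<and> a \<le> x))"

definition sB :: "('a::boolean_algebra \<Rightarrow> 'a \<Rightarrow> 'a) \<Rightarrow> 'a list set" where
  "sB cmp = {s. length s = 3 \<and> (\<forall>k<3. atom (s ! k)) \<and> s ! 1 \<le> cmp (s ! 2) (s ! 0)}"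

definition sT :: "('a::boolean_algebra \<Rightarrow> 'a \<Rightarrow> 'a) \<Rightarrow> nat \<Rightarrow> ('a list \<times> 'a list) set" where
  "sT cmp k = {(s, t). s \<in> sB cmp \<and> t \<in> sB cmp \<and> s ! k = t ! k}"

text \<open>For distinct k, l < 3, the remaining index is 3 - k - l.\<close>
definition third :: "nat \<Rightarrow> nat \<Rightarrow> nat" where
  "third k l = 3 - k - l"

definition sE :: "('a::boolean_algebra \<Rightarrow> 'a \<Rightarrow> 'a) \<Rightarrow> 'a \<Rightarrow> nat \<Rightarrow> nat \<Rightarrow> 'a list set" where
  "sE cmp e k l = (if k = l then sB cmp else {s \<in> sB cmp. s ! third k l \<le> e})"

text \<open>A trail <t0,k0,...,tn,kn> is the nonempty list [(t0,k0),...,(tn,kn)].\<close>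

definition Tr :: "('a::boolean_algebra \<Rightarrow> 'a \<Rightarrow> 'a) \<Rightarrow> ('a list \<times> nat) list set" where
  "Tr cmp = {p. p \<noteq> [] \<and>
     (\<forall>i<length p. fst (p ! i) \<in> sB cmp \<and> snd (p ! i) < 3) \<and>
     (\<forall>i. Suc i < length p \<longrightarrow> fst (p ! i) \<noteq> fst (p ! Suc i) \<and>
           (fst (p ! i), fst (p ! Suc i)) \<in> sT cmp (snd (p ! i)))}"

definition setptr :: "('a list \<times> nat) list \<Rightarrow> nat \<Rightarrow> ('a list \<times> nat) list" where
  "setptr p l = butlast p @ [(fst (last p), l)]"

definition step :: "('a::boolean_algebra \<Rightarrow> 'a \<Rightarrow> 'a) \<Rightarrow> 'a \<Rightarrow>
    (('a list \<times> nat) list \<times> ('a list \<times> nat) list) set" where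
  "step cmp e =
     {(xs @ [(t, l), (s, l), (t, k)] @ ys, xs @ [(t, k)] @ ys) | xs t l s k ys.
        xs @ [(t, l), (s, l), (t, k)] @ ys \<in> Tr cmp \<and> xs @ [(t, k)] @ ys \<in> Tr cmp}
   \<union> {(xs @ [(t, l), (s, k)], xs @ [(t, k)]) | xs t l s k.
        l \<noteq> k \<and> xs @ [(t, l), (s, k)] \<in> Tr cmp \<and> xs @ [(t, k)] \<in> Tr cmp}
   \<union> {(xs @ [(t, l)], xs @ [(t, k)]) | xs t l k.
        t \<in> sE cmp e l k \<and> xs @ [(t, l)] \<in> Tr cmp \<and> xs @ [(t, k)] \<in> Tr cmp}"

definition approx :: "('a::boolean_algebra \<Rightarrow> 'a \<Rightarrow> 'a) \<Rightarrow> 'a \<Rightarrow>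
    (('a list \<times> nat) list \<times> ('a list \<times> nat) list) set" where
  "approx cmp e = {(p, q). p \<in> Tr cmp \<and> q \<in> Tr cmp \<and>
       (p, q) \<in> (step cmp e \<union> (step cmp e)\<inverse>)\<^sup>*}"

definition cls :: "('a::boolean_algebra \<Rightarrow> 'a \<Rightarrow> 'a) \<Rightarrow> 'a \<Rightarrow>
    ('a list \<times> nat) list \<Rightarrow> ('a list \<times> nat) list set" where
  "cls cmp e p = approx cmp e `` {p}"

definition reduced :: "('a::boolean_algebra \<Rightarrow> 'a \<Rightarrow> 'a) \<Rightarrow> 'a \<Rightarrow> ('a list \<times> nat) list \<Rightarrow> bool" where
  "reduced cmp e p \<longleftrightarrow>
     (length p = 1 \<longrightarrow> (\<forall>l<3. fst (p ! 0) \<in> sE cmp e (snd (p ! 0)) l \<longrightarrow> snd (p ! 0) \<le> l)) \<and>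
     (length p > 1 \<longrightarrow>
        snd (p ! (length p - 2)) = snd (p ! (length p - 1)) \<and>
        (\<forall>l<3. fst (p ! (length p - 1)) \<in> sE cmp e (snd (p ! (length p - 1))) l
                 \<longleftrightarrow> snd (p ! (length p - 1)) = l)) \<and>
     (\<forall>i. i + 2 < length p \<longrightarrow> fst (p ! i) \<noteq> fst (p ! (i + 2)) \<or> snd (p ! i) \<noteq> snd (p ! (i + 1)))"

definition sU :: "('a::boolean_algebra \<Rightarrow> 'a \<Rightarrow> 'a) \<Rightarrow> 'a \<Rightarrow> ('a list \<times> nat) list set set" where
  "sU cmp e = cls cmp e ` Tr cmp"

definition rep :: "('a::boolean_algebra \<Rightarrow> 'a \<Rightarrow> 'a) \<Rightarrow> 'a \<Rightarrow> ('a list \<times> nat) list set \<Rightarrow> ('a list \<times> nat) list" where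
  "rep cmp e u = (THE p. p \<in> u \<and> reduced cmp e p)"

definition ulen :: "('a::boolean_algebra \<Rightarrow> 'a \<Rightarrow> 'a) \<Rightarrow> 'a \<Rightarrow> ('a list \<times> nat) list set \<Rightarrow> nat" where
  "ulen cmp e u = length (rep cmp e u)"

definition sV :: "('a::boolean_algebra \<Rightarrow> 'a \<Rightarrow> 'a) \<Rightarrow> 'a \<Rightarrow>
    (('a list \<times> nat) list set \<times> ('a list \<times> nat) list set \<times> ('a list \<times> nat) list set) set" where
  "sV cmp e = {(cls cmp e (setptr p 0), cls cmp e (setptr p 1), cls cmp e (setptr p 2)) | p. p \<in> Tr cmp}"

definition Xi :: "('a::boolean_algebra \<Rightarrow> 'a \<Rightarrow> 'a) \<Rightarrow> 'a \<Rightarrow> ('a list \<times> nat) list set \<Rightarrow>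
    (('a list \<times> nat) list set \<times> ('a list \<times> nat) list set) set" where
  "Xi cmp e u = (if ulen cmp e u = 1 then {}
     else {(u, cls cmp e (setptr (rep cmp e u) l)) | l. l < 3 \<and> l \<noteq> snd (last (rep cmp e u))})"

definition Xi_pair where
  "Xi_pair cmp e u v \<longleftrightarrow> (u, v) \<in> Xi cmp e u \<or> (v, u) \<in> Xi cmp e v"

definition base_pair :: "('a::boolean_algebra \<Rightarrow> 'a \<Rightarrow> 'a) \<Rightarrow> 'a \<Rightarrow>
    ('a list \<times> nat) list set \<Rightarrow> ('a list \<times> nat) list set \<Rightarrow> bool" where
  "base_pair cmp e u v \<longleftrightarrow> (\<exists>t \<in> sB cmp. \<exists>k l m. k < 3 \<and> l < 3 \<and> m < 3 \<and> distinct [k, l, m] \<and>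
      t ! m \<le> - e \<and> u = cls cmp e [(t, k)] \<and> v = cls cmp e [(t, l)])"

definition perm3 :: "'b \<times> 'b \<times> 'b \<Rightarrow> 'b \<times> 'b \<times> 'b \<Rightarrow> bool" where
  "perm3 x y \<longleftrightarrow> (case x of (a, b, c) \<Rightarrow>
     y \<in> {(a, b, c), (a, c, b), (b, a, c), (b, c, a), (c, a, b), (c, b, a)})"

end

theory Submission
  imports Defs
begin


section \<open>Algebra\<close>

lemma WA_rid: "WA cmp conv e \<Longrightarrow> cmp x e = x" by (simp add: WA_def)
lemma WA_cc: "WA cmp conv e \<Longrightarrow> conv (conv x) = x" by (simp add: WA_def)
lemma WA_ca: "WA cmp conv e \<Longrightarrow> conv (cmp x y) = cmp (conv y) (conv x)" by (simp add: WA_def)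
lemma WA_ds: "WA cmp conv e \<Longrightarrow> cmp (sup x y) z = sup (cmp x z) (cmp y z)" by (simp add: WA_def)
lemma WA_cs: "WA cmp conv e \<Longrightarrow> conv (sup x y) = sup (conv x) (conv y)" by (simp add: WA_def)

lemma WA_monol: assumes "WA cmp conv e" "x \<le> y" shows "cmp x z \<le> cmp y z"
proof -
  have "cmp y z = sup (cmp x z) (cmp y z)" using WA_ds[OF assms(1), of x y z] assms(2)
    by (simp add: sup_absorb2)
  then show ?thesis by (metis sup.cobounded1)
qed

lemma WA_convmono: assumes "WA cmp conv e" "x \<le> y" shows "conv x \<le> conv y"
proof -
  have "conv y = sup (conv x) (conv y)" using WA_cs[OF assms(1), of x y] assms(2)
    by (simp add: sup_absorb2)
  then show ?thesis by (metis sup.cobounded1)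
qed

lemma WA_monor: assumes "WA cmp conv e" "x \<le> y" shows "cmp z x \<le> cmp z y"
proof -
  have "cmp z x = conv (cmp (conv x) (conv z))" using WA_cc[OF assms(1)] WA_ca[OF assms(1)] by metis
  also have "\<dots> \<le> conv (cmp (conv y) (conv z))"
    by (intro WA_convmono[OF assms(1)] WA_monol[OF assms(1)] WA_convmono[OF assms(1)] assms(2))
  also have "\<dots> = cmp z y" using WA_cc[OF assms(1)] WA_ca[OF assms(1)] by metis
  finally show ?thesis .
qed

lemma WA_lid: assumes "WA cmp conv e" shows "cmp e x = x"
proof -
  have ce: "conv e = e"
  proof -
    have "conv e = cmp (conv e) e" using WA_rid[OF assms] by metis
    then have "conv (conv e) = cmp (conv e) (conv (conv e))" using WA_ca[OF assms] by metis
    then show ?thesis using WA_cc[OF assms] WA_rid[OF assms] by metis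
  qed
  have "cmp e x = conv (conv (cmp e x))" using WA_cc[OF assms] by metis
  also have "\<dots> = conv (cmp (conv x) (conv e))" using WA_ca[OF assms] by metis
  also have "\<dots> = x" using ce WA_rid[OF assms] WA_cc[OF assms] by metis
  finally show ?thesis .
qed

lemma atom_le_eq: "atom a \<Longrightarrow> atom b \<Longrightarrow> a \<le> b \<Longrightarrow> a = b"
  unfolding atom_def by blast

lemma atom_split: assumes "atom a" shows "a \<le> e \<or> a \<le> - e"
proof -
  have "inf a e \<le> a" by simp
  then have "inf a e = bot \<or> inf a e = a" using assms unfolding atom_def by blast
  then show ?thesis
  proof
    assume "inf a e = bot" then have "a \<le> - e" by (simp add: inf_shunt)
    then show ?thesis by simp
  next
    assume "inf a e = a" then have "a \<le> e" by (metis inf.cobounded2)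
    then show ?thesis by simp
  qed
qed

lemma sB_two3:
  assumes W: "WA cmp conv e" and v: "v \<in> sB cmp"
  shows "v!0 \<le> e \<Longrightarrow> v!1 \<le> e \<Longrightarrow> v!2 \<le> e"
    and "v!0 \<le> e \<Longrightarrow> v!2 \<le> e \<Longrightarrow> v!1 \<le> e"
    and "v!1 \<le> e \<Longrightarrow> v!2 \<le> e \<Longrightarrow> v!0 \<le> e"
proof -
  have a0: "atom (v!0)" and a1: "atom (v!1)" and a2: "atom (v!2)" and c: "v!1 \<le> cmp (v!2) (v!0)"
    using v unfolding sB_def by auto
  show "v!0 \<le> e \<Longrightarrow> v!1 \<le> e \<Longrightarrow> v!2 \<le> e"
  proof -
    assume h: "v!0 \<le> e" "v!1 \<le> e"
    have "v!1 \<le> cmp (v!2) e" using c WA_monor[OF W h(1)] order_trans by blast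
    then have "v!1 \<le> v!2" using WA_rid[OF W] by metis
    then have "v!1 = v!2" using atom_le_eq a1 a2 by blast
    then show ?thesis using h by simp
  qed
  show "v!0 \<le> e \<Longrightarrow> v!2 \<le> e \<Longrightarrow> v!1 \<le> e"
  proof -
    assume h: "v!0 \<le> e" "v!2 \<le> e"
    have "cmp (v!2) (v!0) \<le> cmp (v!2) e" using WA_monor[OF W h(1)] .
    also have "\<dots> = v!2" using WA_rid[OF W] by metis
    finally show ?thesis using c h order_trans by blast
  qed
  show "v!1 \<le> e \<Longrightarrow> v!2 \<le> e \<Longrightarrow> v!0 \<le> e"
  proof -
    assume h: "v!1 \<le> e" "v!2 \<le> e"
    have "v!1 \<le> cmp e (v!0)" using c WA_monol[OF W h(2)] order_trans by blast
    then have "v!1 \<le> v!0" using WA_lid[OF W] by metis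
    then have "v!1 = v!0" using atom_le_eq a1 a0 by blast
    then show ?thesis using h by simp
  qed
qed

lemma abs_trans3:
  assumes t1: "Q 0 \<Longrightarrow> Q 1 \<Longrightarrow> Q 2" and t2: "Q 0 \<Longrightarrow> Q 2 \<Longrightarrow> Q 1" and t3: "Q 1 \<Longrightarrow> Q 2 \<Longrightarrow> Q 0"
  and k: "k = (0::nat) \<or> k = 1 \<or> k = 2" and jj: "j = (0::nat) \<or> j = 1 \<or> j = 2"
  and ii: "i = (0::nat) \<or> i = 1 \<or> i = 2"
  and r: "j = k \<or> Q (third k j)"
  shows "(i = j \<or> Q (third j i)) \<longleftrightarrow> (i = k \<or> Q (third k i))"
  using k jj ii r apply (elim disjE)
  apply (simp_all add: third_def)
  using t1 t2 t3 unfolding One_nat_def apply blast+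
  done

definition cl :: "('a::boolean_algebra \<Rightarrow> 'a \<Rightarrow> 'a) \<Rightarrow> 'a \<Rightarrow> 'a list \<Rightarrow> nat \<Rightarrow> nat set" where
  "cl cmp e v k = {j. j < 3 \<and> v \<in> sE cmp e k j}"

lemma less3: "(k::nat) < 3 \<Longrightarrow> k = 0 \<or> k = 1 \<or> k = 2" by auto

lemma cl_iff: "v \<in> sB cmp \<Longrightarrow> j \<in> cl cmp e v k \<longleftrightarrow> j < 3 \<and> (j = k \<or> v ! third k j \<le> e)"
  unfolding cl_def sE_def by auto

lemma cl_self: "v \<in> sB cmp \<Longrightarrow> k < 3 \<Longrightarrow> k \<in> cl cmp e v k"
  by (simp add: cl_iff)

lemma cl_class:
  assumes W: "WA cmp conv e" and v: "v \<in> sB cmp" and k: "k < 3" and j: "j \<in> cl cmp e v k"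
  shows "cl cmp e v j = cl cmp e v k"
proof -
  note t = sB_two3[OF W v]
  have j3: "j < 3" using j cl_iff[OF v] by blast
  show ?thesis
  proof (rule set_eqI)
    fix i
    show "i \<in> cl cmp e v j \<longleftrightarrow> i \<in> cl cmp e v k"
    proof (cases "i < 3")
      case False then show ?thesis by (simp add: cl_iff[OF v])
    next
      case True
      have jj: "j = k \<or> v ! third k j \<le> e" using j cl_iff[OF v] by blast
      show ?thesis unfolding cl_iff[OF v]
        using abs_trans3[where Q="\<lambda>x. v ! x \<le> e", OF t less3[OF k] less3[OF j3] less3[OF True] jj] True
        by simp
    qed
  qed
qed

lemma cl_transfer:
  assumes W: "WA cmp conv e" and a: "a \<in> sB cmp" and b: "b \<in> sB cmp" and l: "l < 3"
    and ab: "a ! l = b ! l" and k: "k < 3" and jl: "j \<noteq> l" and kl: "k \<noteq> l"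
    and j: "j \<in> cl cmp e b k"
  shows "cl cmp e a j = cl cmp e a k"
proof (cases "j = k")
  case True then show ?thesis by simp
next
  case False
  have j3: "j < 3" using j cl_iff[OF b] by blast
  have th: "third k j = l" using False jl kl less3[OF k] less3[OF j3] less3[OF l]
    unfolding third_def by auto
  have "b ! l \<le> e" using j False th cl_iff[OF b] by auto
  then have "j \<in> cl cmp e a k" using ab th j3 cl_iff[OF a] by auto
  then show ?thesis using cl_class[OF W a k] by blast
qed



fun trl :: "('a::boolean_algebra \<Rightarrow> 'a \<Rightarrow> 'a) \<Rightarrow> ('a list \<times> nat) list \<Rightarrow> bool" where
  "trl cmp [] = False"
| "trl cmp [a] = (fst a \<in> sB cmp \<and> snd a < 3)"
| "trl cmp (a # b # r) = (fst a \<in> sB cmp \<and> snd a < 3 \<and> fst a \<noteq> fst b \<and>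
      (fst a, fst b) \<in> sT cmp (snd a) \<and> trl cmp (b # r))"

lemma Tr_trl: "p \<in> Tr cmp \<longleftrightarrow> trl cmp p"
proof (induction cmp p rule: trl.induct)
  case (1 cmp) then show ?case by (simp add: Tr_def)
next
  case (2 cmp a) then show ?case by (simp add: Tr_def)
next
  case (3 cmp a b r)
  have "a # b # r \<in> Tr cmp \<longleftrightarrow> (fst a \<in> sB cmp \<and> snd a < 3 \<and> fst a \<noteq> fst b \<and>
      (fst a, fst b) \<in> sT cmp (snd a) \<and> b # r \<in> Tr cmp)" (is "?L \<longleftrightarrow> ?R")
  proof
    assume L: ?L
    have A: "\<And>i. i < length (a#b#r) \<Longrightarrow> fst ((a#b#r) ! i) \<in> sB cmp \<and> snd ((a#b#r) ! i) < 3"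
      using L unfolding Tr_def by blast
    have B: "\<And>i. Suc i < length (a#b#r) \<Longrightarrow> fst ((a#b#r) ! i) \<noteq> fst ((a#b#r) ! Suc i) \<and>
           (fst ((a#b#r) ! i), fst ((a#b#r) ! Suc i)) \<in> sT cmp (snd ((a#b#r) ! i))"
      using L unfolding Tr_def by blast
    have "b # r \<in> Tr cmp"
      unfolding Tr_def
    proof (intro CollectI conjI allI impI)
      show "b # r \<noteq> []" by simp
    next
      fix i assume "i < length (b # r)"
      then show "fst ((b # r) ! i) \<in> sB cmp" "snd ((b # r) ! i) < 3" using A[of "Suc i"] by auto
    next
      fix i assume "Suc i < length (b # r)"
      then show "fst ((b # r) ! i) \<noteq> fst ((b # r) ! Suc i)"
        "(fst ((b # r) ! i), fst ((b # r) ! Suc i)) \<in> sT cmp (snd ((b # r) ! i))"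
        using B[of "Suc i"] by auto
    qed
    then show ?R using A[of 0] B[of 0] by auto
  next
    assume R: ?R
    show ?L unfolding Tr_def
    proof (intro CollectI conjI allI impI)
      show "a # b # r \<noteq> []" by simp
    next
      fix i assume i: "i < length (a # b # r)"
      show "fst ((a # b # r) ! i) \<in> sB cmp" "snd ((a # b # r) ! i) < 3"
      proof -
        have "fst ((a # b # r) ! i) \<in> sB cmp \<and> snd ((a # b # r) ! i) < 3"
        proof (cases i)
          case 0 then show ?thesis using R by simp
        next
          case (Suc j) then show ?thesis using R i unfolding Tr_def by auto
        qed
        then show "fst ((a # b # r) ! i) \<in> sB cmp" "snd ((a # b # r) ! i) < 3" by auto
      qed
    next
      fix i assume i: "Suc i < length (a # b # r)"
      have "fst ((a # b # r) ! i) \<noteq> fst ((a # b # r) ! Suc i) \<and>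
        (fst ((a # b # r) ! i), fst ((a # b # r) ! Suc i)) \<in> sT cmp (snd ((a # b # r) ! i))"
      proof (cases i)
        case 0 then show ?thesis using R by simp
      next
        case (Suc j) then show ?thesis using R i unfolding Tr_def by auto
      qed
      then show "fst ((a # b # r) ! i) \<noteq> fst ((a # b # r) ! Suc i)"
        "(fst ((a # b # r) ! i), fst ((a # b # r) ! Suc i)) \<in> sT cmp (snd ((a # b # r) ! i))" by auto
    qed
  qed
  then show ?case using 3 by simp
qed

lemma trl_hd: "trl cmp (a # ys) \<Longrightarrow> trl cmp [a]"
  by (cases ys) auto

lemma trl_split: "trl cmp (xs @ a # ys) \<longleftrightarrow> trl cmp (xs @ [a]) \<and> trl cmp (a # ys)"
proof (induction xs)
  case Nil
  have "trl cmp (a # ys) \<Longrightarrow> trl cmp [a]" by (rule trl_hd)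
  then show ?case by (simp only: append_Nil) blast
next
  case (Cons x xs)
  show ?case
  proof (cases xs)
    case Nil then show ?thesis using trl_hd[of cmp a ys] by auto
  next
    case (Cons y xs') then show ?thesis using Cons.IH by auto
  qed
qed

lemma trl_snoc_ptr: "trl cmp (xs @ [(t, l)]) \<Longrightarrow> k < 3 \<Longrightarrow> trl cmp (xs @ [(t, k)])"
proof (induction xs)
  case Nil then show ?case by simp
next
  case (Cons x xs)
  then show ?case by (cases xs) auto
qed

lemma trl_ne: "trl cmp p \<Longrightarrow> p \<noteq> []" by auto

lemma trl_setptr: "trl cmp p \<Longrightarrow> l < 3 \<Longrightarrow> trl cmp (setptr p l)"
proof -
  assume p: "trl cmp p" and l: "l < 3"
  have "p = butlast p @ [(fst (last p), snd (last p))]" using trl_ne[OF p] by simp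
  then have "trl cmp (butlast p @ [(fst (last p), snd (last p))])" using p by simp
  then show ?thesis unfolding setptr_def using trl_snoc_ptr l by blast
qed

lemma trl_prefix: "trl cmp (xs @ ys) \<Longrightarrow> xs \<noteq> [] \<Longrightarrow> trl cmp xs"
proof -
  assume h: "trl cmp (xs @ ys)" "xs \<noteq> []"
  obtain xs' a where xs: "xs = xs' @ [a]" using h(2) by (metis rev_exhaust)
  show ?thesis using h(1) trl_split[of cmp xs' a ys] xs by simp
qed

lemma length_setptr: "p \<noteq> [] \<Longrightarrow> length (setptr p l) = length p"
  by (simp add: setptr_def)

lemma setptr_nth: "i < length p - 1 \<Longrightarrow> setptr p l ! i = p ! i"
  by (simp add: setptr_def nth_append nth_butlast)

lemma setptr_nth_fst: "p \<noteq> [] \<Longrightarrow> i < length p \<Longrightarrow> fst (setptr p l ! i) = fst (p ! i)"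
  apply (cases "i < length p - 1")
   apply (simp add: setptr_nth)
  apply (subgoal_tac "i = length p - 1")
   apply (simp add: setptr_def nth_append last_conv_nth)
  apply simp
  done

lemma last_setptr: "last (setptr p l) = (fst (last p), l)" by (simp add: setptr_def)
lemma hd_setptr: "p \<noteq> [] \<Longrightarrow> fst (hd (setptr p l)) = fst (hd p)"
  by (cases p rule: rev_cases) (auto simp: setptr_def hd_append)

fun edges :: "('b \<times> nat) list \<Rightarrow> ('b \<times> nat \<times> 'b) list" where
  "edges (a # b # r) = (fst a, snd a, fst b) # edges (b # r)"
| "edges _ = []"

lemma edges_split: "edges (xs @ a # ys) = edges (xs @ [a]) @ edges (a # ys)"
proof (induction xs)
  case Nil then show ?case by simp
next
  case (Cons x xs)
  then show ?case by (cases xs) auto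
qed

lemma edges_snoc_ptr: "edges (xs @ [(t, l)]) = edges (xs @ [(t, k)])"
proof (induction xs)
  case Nil then show ?case by simp
next
  case (Cons x xs)
  then show ?case by (cases xs) auto
qed

lemma length_edges: "length (edges p) = length p - 1"
  by (induction p rule: edges.induct) auto

lemma nth_edges: "i < length p - 1 \<Longrightarrow> edges p ! i = (fst (p ! i), snd (p ! i), fst (p ! Suc i))"
proof (induction p arbitrary: i rule: edges.induct)
  case (1 a b r) then show ?case by (cases i) auto
qed auto

lemma edges_good: "trl cmp p \<Longrightarrow> (a, l, b) \<in> set (edges p) \<Longrightarrow>
    a \<in> sB cmp \<and> b \<in> sB cmp \<and> l < 3 \<and> a ! l = b ! l"
proof (induction p rule: edges.induct)
  case (1 x y r) then show ?case by (auto simp: sT_def)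
qed auto

fun fpath :: "'b \<Rightarrow> ('b \<times> nat \<times> 'b) list \<Rightarrow> bool" where
  "fpath v [] = True"
| "fpath v ((a, l, b) # E) = (a = v \<and> fpath b E)"

fun fend :: "'b \<Rightarrow> ('b \<times> nat \<times> 'b) list \<Rightarrow> 'b" where
  "fend v [] = v"
| "fend v ((a, l, b) # E) = fend b E"

lemma edges_path: "p \<noteq> [] \<Longrightarrow> fpath (fst (hd p)) (edges p) \<and> fend (fst (hd p)) (edges p) = fst (last p)"
  by (induction p rule: edges.induct) auto

lemma edges_inj: "p \<noteq> [] \<Longrightarrow> q \<noteq> [] \<Longrightarrow> fst (hd p) = fst (hd q) \<Longrightarrow> edges p = edges q \<Longrightarrow>
   snd (last p) = snd (last q) \<Longrightarrow> p = q"
proof (induction p arbitrary: q rule: edges.induct)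
  case (1 a b r)
  have "length (edges q) = length (edges (a # b # r))" using 1(5) by simp
  then have "length q - 1 = Suc (length r)" using length_edges[of q] length_edges[of "a # b # r"] by simp
  then obtain c d r' where q: "q = c # d # r'"
    by (cases q rule: edges.cases) auto
  have ac: "a = c" using 1(4) 1(5) q by (cases a; cases c) auto
  have "b # r = d # r'"
  proof (rule 1(1))
    show "b # r \<noteq> []" "d # r' \<noteq> []" by simp_all
    show "fst (hd (b # r)) = fst (hd (d # r'))" using 1(5) q by simp
    show "edges (b # r) = edges (d # r')" using 1(5) q by simp
    show "snd (last (b # r)) = snd (last (d # r'))" using 1(6) q by simp
  qed
  then show ?case using ac q by simp
next
  case ("2_1")
  then show ?case by simp
next
  case ("2_2" a)
  have "length q - 1 = 0" using length_edges[of q] "2_2"(4) by simp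
  then obtain c where "q = [c]" using "2_2"(2) by (cases q rule: edges.cases) auto
  then show ?case using "2_2" by (cases a; cases c; auto)
qed

section \<open>Free reduction\<close>

fun einv :: "('b \<times> nat \<times> 'b) \<Rightarrow> ('b \<times> nat \<times> 'b)" where
  "einv (a, l, b) = (b, l, a)"

lemma einv_einv[simp]: "einv (einv x) = x" by (cases x) auto
lemma einv_eq_iff: "(einv x = y) \<longleftrightarrow> (x = einv y)" by (cases x; cases y) auto

definition push :: "('b \<times> nat \<times> 'b) list \<Rightarrow> ('b \<times> nat \<times> 'b) \<Rightarrow> ('b \<times> nat \<times> 'b) list" where
  "push S x = (case S of [] \<Rightarrow> [x] | y # S' \<Rightarrow> if y = einv x then S' else x # S)"

definition fred :: "('b \<times> nat \<times> 'b) list \<Rightarrow> ('b \<times> nat \<times> 'b) list" where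
  "fred E = foldl push [] E"

fun red :: "('b \<times> nat \<times> 'b) list \<Rightarrow> bool" where
  "red (x # y # S) = (x \<noteq> einv y \<and> red (y # S))"
| "red _ = True"

lemma red_tl: "red (y # S) \<Longrightarrow> red S" by (cases S) auto

lemma red_push: "red S \<Longrightarrow> red (push S x)"
proof (cases S)
  case Nil then show ?thesis by (simp add: push_def)
next
  case (Cons y S')
  assume r: "red S"
  show ?thesis
  proof (cases "y = einv x")
    case True then show ?thesis using r Cons red_tl by (simp add: push_def)
  next
    case False
    then have "x \<noteq> einv y" using einv_eq_iff by metis
    then show ?thesis using r Cons False by (simp add: push_def)
  qed
qed

lemma push_cancel: "red S \<Longrightarrow> push (push S x) (einv x) = S"
proof (cases S)
  case Nil then show ?thesis by (simp add: push_def)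
next
  case (Cons y S')
  assume r: "red S"
  show ?thesis
  proof (cases "y = einv x")
    case True
    show ?thesis
    proof (cases S')
      case Nil then show ?thesis using True Cons by (simp add: push_def)
    next
      case (Cons z S'')
      have "y \<noteq> einv z" using r \<open>S = y # S'\<close> Cons by simp
      then have "z \<noteq> x" using True by auto
      then show ?thesis using True Cons \<open>S = y # S'\<close> by (simp add: push_def)
    qed
  next
    case False then show ?thesis using Cons by (simp add: push_def)
  qed
qed

lemma red_fold: "red S \<Longrightarrow> red (foldl push S E)"
  by (induction E arbitrary: S) (auto simp: red_push)

lemma red_fred: "red (fred E)"
  unfolding fred_def by (rule red_fold) simp

lemma fred_append: "fred (E1 @ E2) = foldl push (fred E1) E2"
  by (simp add: fred_def)

lemma fred_cancel: "fred (E1 @ [x, einv x] @ E2) = fred (E1 @ E2)"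
  by (simp add: fred_def push_cancel red_fred[unfolded fred_def])

lemma fred_snoc: "fred (E @ [x]) = push (fred E) x" by (simp add: fred_def)

fun rpath :: "'b \<Rightarrow> ('b \<times> nat \<times> 'b) list \<Rightarrow> bool" where
  "rpath st [] = True"
| "rpath st [(a, l, b)] = (a = st)"
| "rpath st ((a, l, b) # (c, m, d) # S) = (a = d \<and> rpath st ((c, m, d) # S))"

fun endv :: "'b \<Rightarrow> ('b \<times> nat \<times> 'b) list \<Rightarrow> 'b" where
  "endv st [] = st"
| "endv st ((a, l, b) # S) = b"

lemma rpath_tl: "rpath st ((a, l, b) # S) \<Longrightarrow> rpath st S \<and> endv st S = a"
proof (cases S)
  case (Cons y S')
  assume r: "rpath st ((a, l, b) # S)"
  obtain c m d where "y = (c, m, d)" by (cases y) auto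
  then show ?thesis using r Cons by simp
qed simp

lemma rpath_push: "rpath st S \<Longrightarrow> fst x = endv st S \<Longrightarrow>
   rpath st (push S x) \<and> endv st (push S x) = snd (snd x)"
proof (cases S)
  case Nil
  assume "fst x = endv st S"
  then show ?thesis using Nil by (cases x) (auto simp: push_def)
next
  case (Cons y S')
  assume r: "rpath st S" and f: "fst x = endv st S"
  obtain a l b where x: "x = (a, l, b)" by (cases x) auto
  obtain c m d where y: "y = (c, m, d)" by (cases y) auto
  show ?thesis
  proof (cases "y = einv x")
    case True
    then have cb: "c = b" using x y by simp
    have rs: "rpath st S' \<and> endv st S' = c" using rpath_tl[of st c m d S'] r Cons y by simp
    have "push S x = S'" using True Cons by (simp add: push_def)
    then show ?thesis using rs cb x by simp
  next
    case False
    have "a = d" using f Cons x y by simp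
    moreover have "push S x = x # S" using False Cons by (simp add: push_def)
    ultimately show ?thesis using r Cons x y by simp
  qed
qed

lemma rpath_fold: "rpath st S \<Longrightarrow> fpath (endv st S) E \<Longrightarrow>
   rpath st (foldl push S E) \<and> endv st (foldl push S E) = fend (endv st S) E"
proof (induction E arbitrary: S)
  case Nil then show ?case by simp
next
  case (Cons x E)
  obtain a l b where x: "x = (a, l, b)" by (cases x) auto
  have "rpath st (push S x) \<and> endv st (push S x) = b"
    using rpath_push[OF Cons.prems(1)] Cons.prems(2) x by simp
  then show ?case using Cons.IH[of "push S x"] Cons.prems(2) x by simp
qed

lemma fred_path: "fpath st E \<Longrightarrow> rpath st (fred E) \<and> endv st (fred E) = fend st E"
  unfolding fred_def using rpath_fold[of st "[]" E] by simp

lemma set_push: "set (push S x) \<subseteq> insert x (set S)"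
  by (cases S) (auto simp: push_def)

lemma set_fold: "set (foldl push S E) \<subseteq> set S \<union> set E"
proof (induction E arbitrary: S)
  case Nil then show ?case by simp
next
  case (Cons x E) then show ?case using set_push[of S x] by fastforce
qed

lemma set_fred: "set (fred E) \<subseteq> set E"
  unfolding fred_def using set_fold[of "[]" E] by simp

lemma length_fold: "length (foldl push S E) \<le> length S + length E"
proof (induction E arbitrary: S)
  case Nil then show ?case by simp
next
  case (Cons x E)
  have "length (push S x) \<le> Suc (length S)" by (cases S) (auto simp: push_def)
  then show ?case using Cons.IH[of "push S x"] by simp
qed

lemma length_fred: "length (fred E) \<le> length E"
  unfolding fred_def using length_fold[of "[]" E] by simp

definition noinv :: "('b \<times> nat \<times> 'b) list \<Rightarrow> bool" where
  "noinv E \<longleftrightarrow> (\<forall>i. Suc i < length E \<longrightarrow> E ! Suc i \<noteq> einv (E ! i))"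

lemma fred_noinv: "noinv E \<Longrightarrow> fred E = rev E"
proof (induction E rule: rev_induct)
  case Nil then show ?case by (simp add: fred_def)
next
  case (snoc x E)
  have n: "noinv E" unfolding noinv_def
  proof (intro allI impI)
    fix i assume i: "Suc i < length E"
    have "(E @ [x]) ! Suc i \<noteq> einv ((E @ [x]) ! i)" using snoc.prems i unfolding noinv_def by simp
    then show "E ! Suc i \<noteq> einv (E ! i)" using i by (simp add: nth_append)
  qed
  show ?case
  proof (cases E rule: rev_cases)
    case Nil then show ?thesis by (simp add: fred_def push_def)
  next
    case (snoc E' y)
    have "x \<noteq> einv y" using snoc.prems snoc unfolding noinv_def
      apply (elim allE[of _ "length E'"]) by (simp add: nth_append)
    then have "y \<noteq> einv x" using einv_eq_iff by metis
    have "fred (E @ [x]) = push (rev E) x" using snoc.IH[OF n] by (simp add: fred_snoc)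
    also have "rev E = y # rev E'" using snoc by simp
    finally show ?thesis using \<open>y \<noteq> einv x\<close> snoc by (simp add: push_def)
  qed
qed



fun endp :: "('a::boolean_algebra \<Rightarrow> 'a \<Rightarrow> 'a) \<Rightarrow> 'a \<Rightarrow> 'a list \<Rightarrow> ('a list \<times> nat \<times> 'a list) list \<Rightarrow> nat
    \<Rightarrow> ('a list \<times> nat \<times> 'a list) list \<times> nat" where
  "endp cmp e st [] k = ([], Min (cl cmp e st k))"
| "endp cmp e st ((a, l, b) # S) k = (if \<exists>j. j \<in> cl cmp e b k \<and> j \<noteq> l
      then endp cmp e st S (LEAST j. j \<in> cl cmp e b k \<and> j \<noteq> l) else ((a, l, b) # S, k))"

lemma endp_cong:
  assumes v: "endv st S \<in> sB cmp" and j: "j < 3" and k: "k < 3"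
    and c: "cl cmp e (endv st S) j = cl cmp e (endv st S) k"
  shows "endp cmp e st S j = endp cmp e st S k"
proof (cases S)
  case Nil then show ?thesis using c by simp
next
  case (Cons y S')
  obtain a l b where y: "y = (a, l, b)" by (cases y) auto
  have vb: "b \<in> sB cmp" "cl cmp e b j = cl cmp e b k" using v c Cons y by auto
  show ?thesis
  proof (cases "\<exists>i. i \<in> cl cmp e b k \<and> i \<noteq> l")
    case True then show ?thesis using Cons y vb by simp
  next
    case False
    have "k \<in> cl cmp e b k" using cl_self[OF vb(1) k] .
    then have kl: "k = l" using False by blast
    have "j \<in> cl cmp e b j" using cl_self[OF vb(1) j] .
    then have "j \<in> cl cmp e b k" using vb by simp
    then have "j = l" using False by blast
    then show ?thesis using kl by simp
  qed
qed

lemma length_endp: "length (fst (endp cmp e st S k)) \<le> length S"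
  by (induction cmp e st S k rule: endp.induct) (auto intro: le_SucI)

definition ninv where
  "ninv cmp e p = (fst (hd p), endp cmp e (fst (hd p)) (fred (edges p)) (snd (last p)))"

lemma hd_app_same: "fst (hd (xs @ (t, l) # ys)) = fst (hd (xs @ (t, k) # zs))"
  by (cases xs) auto

lemma step_ninv:
  assumes W: "WA cmp conv e" and stp: "(p, q) \<in> step cmp e"
  shows "ninv cmp e p = ninv cmp e q"
  using stp unfolding step_def
proof (elim UnE CollectE exE conjE)
  fix xs t l s k ys
  assume p: "(p, q) = (xs @ [(t, l), (s, l), (t, k)] @ ys, xs @ [(t, k)] @ ys)"
  then have p1: "p = xs @ (t, l) # ((s, l) # (t, k) # ys)" and q1: "q = xs @ (t, k) # ys" by auto
  have h: "fst (hd p) = fst (hd q)" using p1 q1 hd_app_same by metis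
  have la: "snd (last p) = snd (last q)" using p1 q1 by (cases ys) auto
  have ep: "edges p = edges (xs @ [(t, l)]) @ [(t, l, s), einv (t, l, s)] @ edges ((t, k) # ys)"
    using p1 edges_split[of xs "(t, l)" "(s, l) # (t, k) # ys"] by simp
  have eq: "edges q = edges (xs @ [(t, l)]) @ edges ((t, k) # ys)"
    using q1 edges_split[of xs "(t, k)" ys] edges_snoc_ptr[of xs t l k] by simp
  have "fred (edges p) = fred (edges q)" using ep eq fred_cancel by metis
  then show ?thesis unfolding ninv_def using h la by simp
next
  fix xs t l s k
  assume pq: "(p, q) = (xs @ [(t, l), (s, k)], xs @ [(t, k)])" and lk: "l \<noteq> k"
    and pT: "xs @ [(t, l), (s, k)] \<in> Tr cmp" and qT: "xs @ [(t, k)] \<in> Tr cmp"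
  have p1: "p = xs @ (t, l) # [(s, k)]" and q1: "q = xs @ [(t, k)]" using pq by auto
  have "trl cmp ((t, l) # [(s, k)])" using pT trl_split[of cmp xs "(t, l)" "[(s, k)]"] Tr_trl by auto
  then have tB: "t \<in> sB cmp" and sB': "s \<in> sB cmp" and l3: "l < 3" and k3: "k < 3" and ts: "t ! l = s ! l"
    by (auto simp: sT_def)
  define st where "st = fst (hd q)"
  have h: "fst (hd p) = st" unfolding st_def using p1 q1 hd_app_same by (metis append_Cons append_Nil)
  have la: "snd (last p) = k" "snd (last q) = k" using p1 q1 by auto
  define E1 where "E1 = edges (xs @ [(t, l)])"
  have ep: "edges p = E1 @ [(t, l, s)]" unfolding E1_def
    using p1 edges_split[of xs "(t, l)" "[(s, k)]"] by simp
  have eq: "edges q = E1" unfolding E1_def using q1 edges_snoc_ptr by metis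
  have "fpath st (edges q) \<and> fend st (edges q) = t" using edges_path[of q] q1 unfolding st_def by simp
  then have rp: "rpath st (fred E1)" "endv st (fred E1) = t" using fred_path eq by metis+
  define S where "S = fred E1"
  have fp: "fred (edges p) = push S (t, l, s)" unfolding S_def using ep fred_snoc by metis
  have "endp cmp e st (push S (t, l, s)) k = endp cmp e st S k"
  proof (cases "\<exists>S'. S = (s, l, t) # S'")
    case True
    then obtain S' where S: "S = (s, l, t) # S'" by blast
    have ps: "push S (t, l, s) = S'" using S by (simp add: push_def)
    have es: "endv st S' = s" using rpath_tl[of st s l t S'] rp S unfolding S_def by simp
    have ex: "\<exists>j. j \<in> cl cmp e t k \<and> j \<noteq> l" using cl_self[OF tB k3] lk by blast
    define j0 where "j0 = (LEAST j. j \<in> cl cmp e t k \<and> j \<noteq> l)"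
    have j0: "j0 \<in> cl cmp e t k \<and> j0 \<noteq> l" unfolding j0_def using LeastI_ex[OF ex] .
    then have j03: "j0 < 3" using cl_iff[OF tB] by blast
    have "cl cmp e s j0 = cl cmp e s k"
      using cl_transfer[OF W sB' tB l3 _ k3 _ _, of j0] ts j0 lk by auto
    then have "endp cmp e st S' j0 = endp cmp e st S' k"
      using endp_cong[of st S' cmp j0 k e] es sB' j03 k3 by simp
    moreover have "endp cmp e st S k = endp cmp e st S' j0" using S ex unfolding j0_def by simp
    ultimately show ?thesis using ps by simp
  next
    case False
    have ps: "push S (t, l, s) = (t, l, s) # S"
      using False by (cases S) (auto simp: push_def)
    have ex: "\<exists>j. j \<in> cl cmp e s k \<and> j \<noteq> l" using cl_self[OF sB' k3] lk by blast
    define j0 where "j0 = (LEAST j. j \<in> cl cmp e s k \<and> j \<noteq> l)"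
    have j0: "j0 \<in> cl cmp e s k \<and> j0 \<noteq> l" unfolding j0_def using LeastI_ex[OF ex] .
    then have j03: "j0 < 3" using cl_iff[OF sB'] by blast
    have "cl cmp e t j0 = cl cmp e t k"
      using cl_transfer[OF W tB sB' l3 _ k3 _ _, of j0] ts j0 lk by auto
    then have "endp cmp e st S j0 = endp cmp e st S k"
      using endp_cong[of st S cmp j0 k e] rp tB j03 k3 unfolding S_def by simp
    moreover have "endp cmp e st ((t, l, s) # S) k = endp cmp e st S j0" using ex unfolding j0_def by simp
    ultimately show ?thesis using ps by simp
  qed
  then show ?thesis unfolding ninv_def using h la fp eq S_def st_def by simp
next
  fix xs t l k
  assume pq: "(p, q) = (xs @ [(t, l)], xs @ [(t, k)])" and tE: "t \<in> sE cmp e l k"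
    and pT: "xs @ [(t, l)] \<in> Tr cmp" and qT: "xs @ [(t, k)] \<in> Tr cmp"
  have p1: "p = xs @ [(t, l)]" and q1: "q = xs @ [(t, k)]" using pq by auto
  have "trl cmp [(t, l)]" using pT trl_split[of cmp xs "(t, l)" "[]"] Tr_trl by auto
  then have tB: "t \<in> sB cmp" and l3: "l < 3" by auto
  have "trl cmp [(t, k)]" using qT trl_split[of cmp xs "(t, k)" "[]"] Tr_trl by auto
  then have k3: "k < 3" by auto
  define st where "st = fst (hd q)"
  have h: "fst (hd p) = st" unfolding st_def using p1 q1 hd_app_same by (metis append_Cons append_Nil)
  have eq: "edges p = edges q" using p1 q1 edges_snoc_ptr by metis
  have "fpath st (edges q) \<and> fend st (edges q) = t" using edges_path[of q] q1 unfolding st_def by simp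
  then have rp: "endv st (fred (edges q)) = t" using fred_path by metis
  have "k \<in> cl cmp e t l" unfolding cl_def using tE k3 by simp
  then have "cl cmp e t k = cl cmp e t l" using cl_class[OF W tB l3] by blast
  then have "endp cmp e st (fred (edges q)) l = endp cmp e st (fred (edges q)) k"
    using endp_cong[of st "fred (edges q)" cmp l k e] rp tB l3 k3 by simp
  then show ?thesis unfolding ninv_def using h eq p1 q1 st_def by simp
qed

lemma approx_ninv:
  assumes W: "WA cmp conv e" and a: "(p, q) \<in> approx cmp e"
  shows "ninv cmp e p = ninv cmp e q"
proof -
  have "(p, q) \<in> (step cmp e \<union> (step cmp e)\<inverse>)\<^sup>*" using a unfolding approx_def by simp
  then show ?thesis
  proof (induction rule: rtrancl_induct)
    case base then show ?case by simp
  next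
    case (step y z)
    then show ?case using step_ninv[OF W] by auto
  qed
qed

lemma reduced_noinv:
  assumes r: "reduced cmp e p" shows "noinv (edges p)"
  unfolding noinv_def
proof (intro allI impI)
  fix i assume i: "Suc i < length (edges p)"
  then have i2: "i + 2 < length p" using length_edges[of p] by simp
  have "fst (p ! i) \<noteq> fst (p ! (i + 2)) \<or> snd (p ! i) \<noteq> snd (p ! (i + 1))"
    using r i2 unfolding reduced_def by blast
  moreover have "edges p ! Suc i = (fst (p ! Suc i), snd (p ! Suc i), fst (p ! Suc (Suc i)))"
    using nth_edges[of "Suc i" p] i length_edges[of p] by simp
  moreover have "edges p ! i = (fst (p ! i), snd (p ! i), fst (p ! Suc i))"
    using nth_edges[of i p] i length_edges[of p] by simp
  ultimately show "edges p ! Suc i \<noteq> einv (edges p ! i)" by auto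
qed

lemma reduced_ninv:
  assumes pT: "p \<in> Tr cmp" and r: "reduced cmp e p"
  shows "ninv cmp e p = (fst (hd p), rev (edges p), snd (last p))"
proof -
  have tp: "trl cmp p" using pT Tr_trl by blast
  have ne: "p \<noteq> []" using tp by auto
  have fr: "fred (edges p) = rev (edges p)" using fred_noinv[OF reduced_noinv[OF r]] .
  show ?thesis
  proof (cases "length p = 1")
    case True
    then obtain t k where p: "p = [(t, k)]" by (cases p rule: edges.cases) auto
    have tB: "t \<in> sB cmp" and k3: "k < 3" using tp p by auto
    have "Min (cl cmp e t k) = k"
    proof (rule Min_eqI)
      show "finite (cl cmp e t k)" unfolding cl_def by simp
      show "k \<in> cl cmp e t k" using cl_self[OF tB k3] .
      fix y assume "y \<in> cl cmp e t k"
      then show "k \<le> y" using r p unfolding reduced_def cl_def by auto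
    qed
    then show ?thesis unfolding ninv_def using p by (simp add: fred_def)
  next
    case False
    then have n2: "length p \<ge> 2" using ne by (cases p) (auto simp: Suc_le_eq)
    define n where "n = length p"
    have le: "length (edges p) = n - 1" using length_edges n_def by simp
    have lst: "last (edges p) = (fst (p ! (n - 2)), snd (p ! (n - 2)), fst (p ! (n - 1)))"
    proof -
      have "edges p \<noteq> []" using le n2 n_def by auto
      then have "last (edges p) = edges p ! (n - 2)" using le last_conv_nth
        by (metis diff_diff_left one_add_one)
      also have "\<dots> = (fst (p ! (n - 2)), snd (p ! (n - 2)), fst (p ! Suc (n - 2)))"
        using nth_edges[of "n - 2" p] n2 n_def by simp
      finally show ?thesis using n2 n_def by (simp add: Suc_diff_Suc numeral_2_eq_2)
    qed
    obtain R where rv: "rev (edges p) = last (edges p) # R"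
      using le n2 n_def by (metis Suc_1 diff_is_0_eq list.size(3) not_less_eq_eq rev_is_Nil_conv
          rev_rev_ident rev.simps(2) rev_exhaust last_snoc)
    have kk: "snd (p ! (n - 2)) = snd (p ! (n - 1))" using r n2 unfolding reduced_def n_def by auto
    have bE: "\<forall>l<3. fst (p ! (n - 1)) \<in> sE cmp e (snd (p ! (n - 1))) l \<longleftrightarrow> snd (p ! (n - 1)) = l"
      using r n2 unfolding reduced_def n_def by auto
    have nex: "\<not> (\<exists>j. j \<in> cl cmp e (fst (p ! (n - 1))) (snd (p ! (n - 1))) \<and> j \<noteq> snd (p ! (n - 2)))"
      using bE kk unfolding cl_def by auto
    have lastp: "last p = p ! (n - 1)" using ne n_def last_conv_nth by metis
    have "endp cmp e (fst (hd p)) (rev (edges p)) (snd (last p)) =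
      endp cmp e (fst (hd p)) ((fst (p!(n-2)), snd (p!(n-2)), fst (p!(n-1))) # R) (snd (p!(n-1)))"
      by (simp only: rv lst lastp)
    also have "\<dots> = ((fst (p!(n-2)), snd (p!(n-2)), fst (p!(n-1))) # R, snd (p!(n-1)))"
      by (simp only: endp.simps(2) if_not_P[OF nex])
    also have "\<dots> = (rev (edges p), snd (last p))" by (simp only: rv lst lastp)
    finally have "endp cmp e (fst (hd p)) (rev (edges p)) (snd (last p)) = (rev (edges p), snd (last p))" .
    then show ?thesis unfolding ninv_def using fr by simp
  qed
qed

lemma reduced_unique:
  assumes W: "WA cmp conv e" and pT: "p \<in> Tr cmp" and qT: "q \<in> Tr cmp"
    and rp: "reduced cmp e p" and rq: "reduced cmp e q" and a: "(p, q) \<in> approx cmp e"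
  shows "p = q"
proof -
  have "ninv cmp e p = ninv cmp e q" using approx_ninv[OF W a] .
  then have "fst (hd p) = fst (hd q)" "rev (edges p) = rev (edges q)" "snd (last p) = snd (last q)"
    using reduced_ninv[OF pT rp] reduced_ninv[OF qT rq] by auto
  then show ?thesis using edges_inj pT qT Tr_trl trl_ne by (metis rev_rev_ident)
qed

lemma reduced_shortest:
  assumes W: "WA cmp conv e" and pT: "p \<in> Tr cmp" and qT: "q \<in> Tr cmp"
    and rp: "reduced cmp e p" and a: "(p, q) \<in> approx cmp e"
  shows "length p \<le> length q"
proof -
  have "ninv cmp e p = ninv cmp e q" using approx_ninv[OF W a] .
  then have "rev (edges p) = fst (endp cmp e (fst (hd q)) (fred (edges q)) (snd (last q)))"
    using reduced_ninv[OF pT rp] unfolding ninv_def by (metis fst_conv snd_conv)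
  then have "length (edges p) \<le> length (edges q)"
    using length_endp[of cmp e "fst (hd q)" "fred (edges q)" "snd (last q)"] length_fred[of "edges q"]
    by (metis length_rev order_trans)
  moreover have "p \<noteq> []" "q \<noteq> []" using pT qT Tr_trl trl_ne by blast+
  moreover have "length p > 0" "length q > 0" using \<open>p \<noteq> []\<close> \<open>q \<noteq> []\<close> by auto
  ultimately show ?thesis using length_edges[of p] length_edges[of q] by linarith
qed



lemma step_Tr: "(p, q) \<in> step cmp e \<Longrightarrow> p \<in> Tr cmp \<and> q \<in> Tr cmp"
  unfolding step_def by auto

lemma step1I: "xs @ [(t, l), (s, l), (t, k)] @ ys \<in> Tr cmp \<Longrightarrow> xs @ [(t, k)] @ ys \<in> Tr cmp \<Longrightarrow>
   (xs @ [(t, l), (s, l), (t, k)] @ ys, xs @ [(t, k)] @ ys) \<in> step cmp e"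
  unfolding step_def by blast

lemma step2I: "l \<noteq> k \<Longrightarrow> xs @ [(t, l), (s, k)] \<in> Tr cmp \<Longrightarrow> xs @ [(t, k)] \<in> Tr cmp \<Longrightarrow>
   (xs @ [(t, l), (s, k)], xs @ [(t, k)]) \<in> step cmp e"
  unfolding step_def by blast

lemma step3I: "t \<in> sE cmp e l k \<Longrightarrow> xs @ [(t, l)] \<in> Tr cmp \<Longrightarrow> xs @ [(t, k)] \<in> Tr cmp \<Longrightarrow>
   (xs @ [(t, l)], xs @ [(t, k)]) \<in> step cmp e"
  unfolding step_def by blast

lemma approx_refl: "p \<in> Tr cmp \<Longrightarrow> (p, p) \<in> approx cmp e"
  unfolding approx_def by simp

lemma approx_sym: "(p, q) \<in> approx cmp e \<Longrightarrow> (q, p) \<in> approx cmp e"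
proof -
  assume a: "(p, q) \<in> approx cmp e"
  let ?R = "step cmp e \<union> (step cmp e)\<inverse>"
  have "(p, q) \<in> ?R\<^sup>*" using a unfolding approx_def by simp
  then have "(q, p) \<in> (?R\<inverse>)\<^sup>*" by (rule rtrancl_converseI)
  moreover have "?R\<inverse> = ?R" by auto
  ultimately show ?thesis using a unfolding approx_def by auto
qed

lemma approx_trans: "(p, q) \<in> approx cmp e \<Longrightarrow> (q, r) \<in> approx cmp e \<Longrightarrow> (p, r) \<in> approx cmp e"
  unfolding approx_def by auto

lemma step_approx: "(p, q) \<in> step cmp e \<Longrightarrow> (p, q) \<in> approx cmp e"
  using step_Tr unfolding approx_def by blast

lemma cls_mem: "q \<in> cls cmp e p \<longleftrightarrow> (p, q) \<in> approx cmp e"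
  unfolding cls_def by auto

lemma cls_eq_iff: "p \<in> Tr cmp \<Longrightarrow> cls cmp e p = cls cmp e q \<longleftrightarrow> (p, q) \<in> approx cmp e"
proof
  assume p: "p \<in> Tr cmp" and c: "cls cmp e p = cls cmp e q"
  have "p \<in> cls cmp e p" using approx_refl[OF p] cls_mem by metis
  then have "(q, p) \<in> approx cmp e" using c cls_mem by metis
  then show "(p, q) \<in> approx cmp e" using approx_sym by metis
next
  assume "(p, q) \<in> approx cmp e"
  then show "cls cmp e p = cls cmp e q"
    unfolding cls_def using approx_sym approx_trans by blast
qed

lemma step_cls: "(p, q) \<in> step cmp e \<Longrightarrow> cls cmp e p = cls cmp e q"
  using cls_eq_iff step_approx step_Tr by metis

lemma rep_reduced:
  assumes W: "WA cmp conv e" and pT: "p \<in> Tr cmp" and r: "reduced cmp e p"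
  shows "rep cmp e (cls cmp e p) = p"
  unfolding rep_def
proof (rule the_equality)
  show "p \<in> cls cmp e p \<and> reduced cmp e p" using approx_refl[OF pT] cls_mem r by metis
next
  fix q assume q: "q \<in> cls cmp e p \<and> reduced cmp e q"
  then have a: "(p, q) \<in> approx cmp e" using cls_mem by metis
  then have "q \<in> Tr cmp" unfolding approx_def by auto
  then show "q = p" using reduced_unique[OF W pT _ r _ a] q by metis
qed

lemma Xi_reduced:
  assumes W: "WA cmp conv e" and pT: "p \<in> Tr cmp" and r: "reduced cmp e p" and l2: "length p \<ge> 2"
  shows "Xi cmp e (cls cmp e p) = {(cls cmp e p, cls cmp e (setptr p l)) | l. l < 3 \<and> l \<noteq> snd (last p)}"
  unfolding Xi_def ulen_def rep_reduced[OF W pT r] using l2 by auto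

section \<open>Backtracks\<close>

definition nobt :: "('b \<times> nat) list \<Rightarrow> bool" where
  "nobt p \<longleftrightarrow> (\<forall>i. i + 2 < length p \<longrightarrow> fst (p ! i) \<noteq> fst (p ! (i + 2)) \<or> snd (p ! i) \<noteq> snd (p ! (i + 1)))"

lemma nobt_setptr: "p \<noteq> [] \<Longrightarrow> nobt (setptr p l) = nobt p"
proof -
  assume ne: "p \<noteq> []"
  have L: "length (setptr p l) = length p" using length_setptr[OF ne] .
  have "\<And>i. i + 2 < length p \<Longrightarrow>
     (fst (setptr p l ! i) \<noteq> fst (setptr p l ! (i + 2)) \<or> snd (setptr p l ! i) \<noteq> snd (setptr p l ! (i + 1)))
     = (fst (p ! i) \<noteq> fst (p ! (i + 2)) \<or> snd (p ! i) \<noteq> snd (p ! (i + 1)))"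
  proof -
    fix i assume i: "i + 2 < length p"
    have "setptr p l ! i = p ! i" using i by (intro setptr_nth) simp
    moreover have "setptr p l ! (i + 1) = p ! (i + 1)" using i by (intro setptr_nth) simp
    moreover have "fst (setptr p l ! (i + 2)) = fst (p ! (i + 2))" using i ne by (intro setptr_nth_fst) auto
    ultimately show "?thesis i" by simp
  qed
  then show ?thesis unfolding nobt_def L by auto
qed

lemma nobt_prefix: "nobt (xs @ ys) \<Longrightarrow> nobt xs"
  unfolding nobt_def
proof (intro allI impI)
  fix i assume h: "\<forall>i. i + 2 < length (xs @ ys) \<longrightarrow>
          fst ((xs @ ys) ! i) \<noteq> fst ((xs @ ys) ! (i + 2)) \<or> snd ((xs @ ys) ! i) \<noteq> snd ((xs @ ys) ! (i + 1))"
    and i: "i + 2 < length xs"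
  have "fst ((xs @ ys) ! i) \<noteq> fst ((xs @ ys) ! (i + 2)) \<or> snd ((xs @ ys) ! i) \<noteq> snd ((xs @ ys) ! (i + 1))"
    using h i by simp
  then show "fst (xs ! i) \<noteq> fst (xs ! (i + 2)) \<or> snd (xs ! i) \<noteq> snd (xs ! (i + 1))"
    using i by (simp add: nth_append)
qed

lemma bt_decomp:
  assumes "\<not> nobt p"
  shows "\<exists>xs t l s k ys. p = xs @ [(t, l), (s, l), (t, k)] @ ys"
proof -
  obtain i where i: "i + 2 < length p" "fst (p ! i) = fst (p ! (i + 2))" "snd (p ! i) = snd (p ! (i + 1))"
    using assms unfolding nobt_def by blast
  have d: "drop i p = p ! i # p ! (i + 1) # p ! (i + 2) # drop (i + 3) p"
  proof -
    have d2: "drop (i + 2) p = p ! (i + 2) # drop (i + 3) p"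
      using Cons_nth_drop_Suc[of "i + 2" p] i(1) by (simp add: numeral_3_eq_3 numeral_2_eq_2)
    have d1: "drop (i + 1) p = p ! (i + 1) # drop (i + 2) p"
      using Cons_nth_drop_Suc[of "i + 1" p] i(1) by (simp add: numeral_2_eq_2)
    have d0: "drop i p = p ! i # drop (i + 1) p"
      using Cons_nth_drop_Suc[of i p] i(1) by simp
    show ?thesis using d0 d1 d2 by simp
  qed
  have "p = take i p @ drop i p" by simp
  also have "\<dots> = take i p @ [(fst (p ! i), snd (p ! i)), (fst (p ! (i+1)), snd (p ! i)), (fst (p ! i), snd (p ! (i+2)))]
      @ drop (i + 3) p" using d i by (simp add: prod_eq_iff)
  finally show ?thesis by blast
qed

lemma setptr_append: "ys \<noteq> [] \<Longrightarrow> setptr (xs @ ys) l = xs @ setptr ys l"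
  by (simp add: setptr_def butlast_append)

lemma setptr_Cons_hd: "\<exists>k' ys'. setptr ((t, k) # ys) l = (t, k') # ys'"
  by (cases ys) (auto simp: setptr_def)

lemma trl_Cons_tl: "trl cmp (a # b # r) \<Longrightarrow> trl cmp (b # r)" by simp

lemma shorten:
  assumes pT: "p \<in> Tr cmp" and nb: "\<not> nobt p"
  shows "\<exists>p' \<in> Tr cmp. length p' < length p \<and> (\<forall>l<3. cls cmp e (setptr p l) = cls cmp e (setptr p' l))"
proof -
  obtain xs t l s k ys where p: "p = xs @ [(t, l), (s, l), (t, k)] @ ys" using bt_decomp[OF nb] by blast
  have tp: "trl cmp (xs @ (t, l) # ((s, l) # (t, k) # ys))" using pT unfolding p Tr_trl by simp
  then have t1: "trl cmp (xs @ [(t, l)])" and t2: "trl cmp ((t, l) # (s, l) # (t, k) # ys)"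
    using trl_split by blast+
  have t3: "trl cmp ((t, k) # ys)" using t2 trl_Cons_tl by blast
  then have k3: "k < 3" using trl_hd by fastforce
  have t4: "trl cmp (xs @ [(t, k)])" using trl_snoc_ptr[OF t1 k3] .
  define p' where "p' = xs @ (t, k) # ys"
  have p'T: "p' \<in> Tr cmp" unfolding p'_def Tr_trl using trl_split t3 t4 by blast
  have len: "length p' < length p" unfolding p'_def p by simp
  have "\<forall>m<3. cls cmp e (setptr p m) = cls cmp e (setptr p' m)"
  proof (intro allI impI)
    fix m :: nat assume m: "m < 3"
    obtain k' ys' where sz: "setptr ((t, k) # ys) m = (t, k') # ys'" using setptr_Cons_hd by metis
    have a1: "setptr p m = xs @ [(t, l), (s, l), (t, k')] @ ys'"
      using p sz setptr_append[of "(t, k) # ys" "xs @ [(t, l), (s, l)]" m] by simp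
    have a2: "setptr p' m = xs @ [(t, k')] @ ys'"
      using sz setptr_append[of "(t, k) # ys" xs m] unfolding p'_def by simp
    have "setptr p m \<in> Tr cmp" "setptr p' m \<in> Tr cmp"
      using pT p'T m trl_setptr Tr_trl by blast+
    then have "(setptr p m, setptr p' m) \<in> step cmp e"
      unfolding a1 a2 by (rule step1I)
    then show "cls cmp e (setptr p m) = cls cmp e (setptr p' m)" by (rule step_cls)
  qed
  then show ?thesis using p'T len by blast
qed

lemma exists_nobt:
  "p \<in> Tr cmp \<Longrightarrow> \<exists>p' \<in> Tr cmp. nobt p' \<and> (\<forall>l<3. cls cmp e (setptr p l) = cls cmp e (setptr p' l))"
proof (induction "length p" arbitrary: p rule: less_induct)
  case less
  show ?case
  proof (cases "nobt p")
    case True then show ?thesis using less.prems by blast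
  next
    case False
    obtain p' where p': "p' \<in> Tr cmp" "length p' < length p"
      "\<forall>l<3. cls cmp e (setptr p l) = cls cmp e (setptr p' l)"
      using shorten[OF less.prems False] by blast
    obtain p'' where "p'' \<in> Tr cmp" "nobt p''" "\<forall>l<3. cls cmp e (setptr p' l) = cls cmp e (setptr p'' l)"
      using less.hyps[OF p'(2) p'(1)] by blast
    then show ?thesis using p'(3) by auto
  qed
qed



lemma third_props: "l < 3 \<Longrightarrow> m < 3 \<Longrightarrow> l \<noteq> m \<Longrightarrow> third l m < 3 \<and> third l m \<noteq> l \<and> third l m \<noteq> m"
  using less3[of l] less3[of m] unfolding third_def by auto

lemma len1_pair:
  assumes W: "WA cmp conv e" and t: "t \<in> sB cmp" and l: "l < 3" and m: "m < 3" and lm: "l \<noteq> m"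
  shows "cls cmp e [(t, l)] = cls cmp e [(t, m)] \<or> base_pair cmp e (cls cmp e [(t, l)]) (cls cmp e [(t, m)])"
proof -
  define n where "n = third l m"
  have n: "n < 3" "n \<noteq> l" "n \<noteq> m" using third_props[OF l m lm] n_def by auto
  have "atom (t ! n)" using t n unfolding sB_def by auto
  then have "t ! n \<le> e \<or> t ! n \<le> - e" by (rule atom_split)
  then show ?thesis
  proof
    assume "t ! n \<le> e"
    then have tE: "t \<in> sE cmp e l m" unfolding sE_def using t lm n_def by simp
    have "[] @ [(t, l)] \<in> Tr cmp" "[] @ [(t, m)] \<in> Tr cmp" using t l m by (simp_all add: Tr_trl)
    then have "([] @ [(t, l)], [] @ [(t, m)]) \<in> step cmp e" using step3I[OF tE] by blast
    then show ?thesis using step_cls by fastforce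
  next
    assume "t ! n \<le> - e"
    then have "base_pair cmp e (cls cmp e [(t, l)]) (cls cmp e [(t, m)])"
      unfolding base_pair_def using t l m n lm by (intro bexI[of _ t] exI[of _ l] exI[of _ m] exI[of _ n]) auto
    then show ?thesis by blast
  qed
qed

lemma Xi_pair_sym: "Xi_pair cmp e u v \<Longrightarrow> Xi_pair cmp e v u"
  unfolding Xi_pair_def by blast

lemma base_pair_sym: "base_pair cmp e u v \<Longrightarrow> base_pair cmp e v u"
proof -
  assume "base_pair cmp e u v"
  then obtain t a b c where h: "t \<in> sB cmp" "a < 3" "b < 3" "c < 3" "distinct [a, b, c]" "t ! c \<le> - e"
    "u = cls cmp e [(t, a)]" "v = cls cmp e [(t, b)]" unfolding base_pair_def by blast
  then have "distinct [b, a, c]" by auto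
  then show ?thesis unfolding base_pair_def using h by blast
qed

lemma setptr_setptr: "setptr (setptr p l) m = setptr p m"
  by (simp add: setptr_def)

lemma setptr_last2: "setptr (r @ [a, (t, k)]) m = r @ [a, (t, m)]"
  by (simp add: setptr_def butlast_append)

lemma setptr_last1: "setptr (r @ [(t, k)]) m = r @ [(t, m)]"
  by (simp add: setptr_def)

context
  fixes cmp :: "'a::boolean_algebra \<Rightarrow> 'a \<Rightarrow> 'a" and conv e r t' k' t k
  assumes W: "WA cmp conv e" and qT: "r @ [(t', k'), (t, k)] \<in> Tr cmp"
    and nb: "nobt (r @ [(t', k'), (t, k)])"
begin

lemma l2_basic: "r @ [(t', k')] \<in> Tr cmp" "nobt (r @ [(t', k')])" "t \<in> sB cmp" "k' < 3"
  "t' \<noteq> t" "t' \<in> sB cmp"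
proof -
  have tp: "trl cmp (r @ (t', k') # [(t, k)])" using qT unfolding Tr_trl by simp
  then have a: "trl cmp (r @ [(t', k')])" and b: "trl cmp [(t', k'), (t, k)]" using trl_split by blast+
  show "r @ [(t', k')] \<in> Tr cmp" using a Tr_trl by blast
  show "nobt (r @ [(t', k')])" using nb nobt_prefix[of "r @ [(t', k')]" "[(t, k)]"] by simp
  show "t \<in> sB cmp" "k' < 3" "t' \<noteq> t" "t' \<in> sB cmp" using b by auto
qed

lemma l2_red: "n < 3 \<Longrightarrow> n \<noteq> k' \<Longrightarrow>
   cls cmp e (setptr (r @ [(t', k'), (t, k)]) n) = cls cmp e (setptr (r @ [(t', k')]) n)"
proof -
  assume n: "n < 3" "n \<noteq> k'"
  have "r @ [(t', k'), (t, n)] \<in> Tr cmp" using qT n trl_setptr[of cmp _ n] setptr_last2[of r "(t', k')" t k n]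
    Tr_trl by metis
  moreover have "r @ [(t', n)] \<in> Tr cmp" using l2_basic(1) n trl_setptr[of cmp _ n] setptr_last1[of r t' k' n]
    Tr_trl by metis
  ultimately have "(r @ [(t', k'), (t, n)], r @ [(t', n)]) \<in> step cmp e"
    using step2I[of k' n] n by blast
  then show ?thesis using step_cls setptr_last2 setptr_last1 by metis
qed

lemma l2_E: "n < 3 \<Longrightarrow> t \<in> sE cmp e k' n \<Longrightarrow>
   cls cmp e (setptr (r @ [(t', k'), (t, k)]) k') = cls cmp e (setptr (r @ [(t', k'), (t, k)]) n)"
proof -
  assume n: "n < 3" and tE: "t \<in> sE cmp e k' n"
  have "(r @ [(t', k')]) @ [(t, k')] \<in> Tr cmp" using qT l2_basic(4) trl_setptr[of cmp _ k'] setptr_last2[of r "(t', k')" t k k']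
    Tr_trl by (metis append.assoc append_Cons append_Nil)
  moreover have "(r @ [(t', k')]) @ [(t, n)] \<in> Tr cmp" using qT n trl_setptr[of cmp _ n] setptr_last2[of r "(t', k')" t k n]
    Tr_trl by (metis append.assoc append_Cons append_Nil)
  ultimately have "((r @ [(t', k')]) @ [(t, k')], (r @ [(t', k')]) @ [(t, n)]) \<in> step cmp e"
    using step3I[OF tE] by blast
  then show ?thesis using step_cls setptr_last2 by (metis append.assoc append_Cons append_Nil)
qed

lemma l2_reduced:
  assumes no: "\<forall>n<3. n \<noteq> k' \<longrightarrow> t \<notin> sE cmp e k' n"
  shows "reduced cmp e (setptr (r @ [(t', k'), (t, k)]) k')"
proof -
  define Q where "Q = r @ [(t', k'), (t, k')]"
  have Qs: "setptr (r @ [(t', k'), (t, k)]) k' = Q" unfolding Q_def by (rule setptr_last2)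
  have nQ: "nobt Q" using nb nobt_setptr[of "r @ [(t', k'), (t, k)]" k'] Qs by simp
  have lQ: "length Q = length r + 2" unfolding Q_def by simp
  have q1: "Q ! (length Q - 2) = (t', k')" unfolding Q_def by (simp add: nth_append)
  have q2: "Q ! (length Q - 1) = (t, k')" unfolding Q_def by (simp add: nth_append)
  have bE: "\<forall>l<3. t \<in> sE cmp e k' l \<longleftrightarrow> k' = l"
    using no l2_basic(3) unfolding sE_def by auto
  show ?thesis unfolding Qs reduced_def
    using nQ lQ q1 q2 bE unfolding nobt_def by auto
qed

lemma l2_Xi:
  assumes no: "\<forall>n<3. n \<noteq> k' \<longrightarrow> t \<notin> sE cmp e k' n"
  shows "Xi cmp e (cls cmp e (setptr (r @ [(t', k'), (t, k)]) k')) =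
     {(cls cmp e (setptr (r @ [(t', k'), (t, k)]) k'), cls cmp e (setptr (r @ [(t', k'), (t, k)]) l)) | l. l < 3 \<and> l \<noteq> k'}"
proof -
  have QT: "setptr (r @ [(t', k'), (t, k)]) k' \<in> Tr cmp"
    using qT l2_basic(4) trl_setptr Tr_trl by blast
  have "length (setptr (r @ [(t', k'), (t, k)]) k') \<ge> 2" by (simp add: setptr_last2)
  then show ?thesis using Xi_reduced[OF W QT l2_reduced[OF no]]
    by (simp add: setptr_setptr last_setptr)
qed

lemma l2_len: "length (setptr (r @ [(t', k')]) n) < length (setptr (r @ [(t', k'), (t, k)]) m)"
  by (simp add: setptr_def)

end

lemma pairL:
  assumes W: "WA cmp conv e"
  shows "q \<in> Tr cmp \<Longrightarrow> nobt q \<Longrightarrow> l < 3 \<Longrightarrow> m < 3 \<Longrightarrow> l \<noteq> m \<Longrightarrow>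
    cls cmp e (setptr q l) = cls cmp e (setptr q m) \<or> Xi_pair cmp e (cls cmp e (setptr q l)) (cls cmp e (setptr q m))
    \<or> base_pair cmp e (cls cmp e (setptr q l)) (cls cmp e (setptr q m))"
proof (induction "length q" arbitrary: q l m rule: less_induct)
  case less
  have tq: "trl cmp q" using less.prems(1) Tr_trl by blast
  then have ne: "q \<noteq> []" by auto
  show ?case
  proof (cases "length q = 1")
    case True
    then obtain t k where q: "q = [(t, k)]" by (cases q rule: edges.cases) auto
    have t: "t \<in> sB cmp" using tq q by simp
    show ?thesis using len1_pair[OF W t less.prems(3,4,5)] q by (auto simp: setptr_def)
  next
    case False
    then have "length q \<ge> 2" using ne by (cases q) (auto simp: Suc_le_eq)
    then obtain r t' k' t k where q: "q = r @ [(t', k'), (t, k)]"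
      by (metis (no_types, opaque_lifting) One_nat_def Suc_1 length_0_conv length_Suc_conv_rev not_less_eq_eq surj_pair
          zero_less_Suc rev_exhaust le_zero_eq length_append_singleton append.assoc append_Cons append_Nil)
    have qT: "r @ [(t', k'), (t, k)] \<in> Tr cmp" and nb: "nobt (r @ [(t', k'), (t, k)])" using less.prems q by auto
    note B = l2_basic[OF W qT nb]
    define c where "c n = cls cmp e (setptr q n)" for n
    define c' where "c' n = cls cmp e (setptr (r @ [(t', k')]) n)" for n
    have IH: "\<And>a b. a < 3 \<Longrightarrow> b < 3 \<Longrightarrow> a \<noteq> b \<Longrightarrow>
       c' a = c' b \<or> Xi_pair cmp e (c' a) (c' b) \<or> base_pair cmp e (c' a) (c' b)"
      unfolding c'_def using less.hyps[OF _ B(1) B(2)] q by simp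
    have red: "\<And>n. n < 3 \<Longrightarrow> n \<noteq> k' \<Longrightarrow> c n = c' n"
      unfolding c_def c'_def q using l2_red[OF W qT nb] by blast
    have key: "\<And>n. n < 3 \<Longrightarrow> n \<noteq> k' \<Longrightarrow>
       c k' = c n \<or> Xi_pair cmp e (c k') (c n) \<or> base_pair cmp e (c k') (c n)"
    proof -
      fix n assume n: "n < 3" "n \<noteq> k'"
      show "c k' = c n \<or> Xi_pair cmp e (c k') (c n) \<or> base_pair cmp e (c k') (c n)"
      proof (cases "\<exists>\<nu><3. \<nu> \<noteq> k' \<and> t \<in> sE cmp e k' \<nu>")
        case True
        then obtain \<nu> where v: "\<nu> < 3" "\<nu> \<noteq> k'" "t \<in> sE cmp e k' \<nu>" by blast
        have ck: "c k' = c' \<nu>" using l2_E[OF W qT nb v(1,3)] red[OF v(1,2)] unfolding c_def q by simp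
        show ?thesis
        proof (cases "\<nu> = n")
          case True then show ?thesis using ck red[OF v(1,2)] by simp
        next
          case False then show ?thesis using IH[OF v(1) n(1) False] ck red[OF n] by simp
        qed
      next
        case False
        then have no: "\<forall>\<nu><3. \<nu> \<noteq> k' \<longrightarrow> t \<notin> sE cmp e k' \<nu>" by blast
        have "(c k', c n) \<in> Xi cmp e (c k')"
          unfolding c_def q l2_Xi[OF W qT nb no] using n by blast
        then show ?thesis unfolding Xi_pair_def by blast
      qed
    qed
    have "c l = c m \<or> Xi_pair cmp e (c l) (c m) \<or> base_pair cmp e (c l) (c m)"
    proof (cases "l = k'")
      case True then show ?thesis using key[OF less.prems(4)] less.prems(5) by simp
    next
      case lF: False
      show ?thesis
      proof (cases "m = k'")
        case True then show ?thesis using key[OF less.prems(3) lF] Xi_pair_sym base_pair_sym by metis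
      next
        case False then show ?thesis using IH[OF less.prems(3,4,5)] red[OF less.prems(3) lF] red[OF less.prems(4) False]
          by simp
      qed
    qed
    then show ?thesis unfolding c_def .
  qed
qed



definition GOAL where
  "GOAL cmp e x \<longleftrightarrow> (\<exists>u\<in>sU cmp e. \<exists>v\<in>sU cmp e. \<exists>w\<in>sU cmp e. u \<noteq> v \<and> u \<noteq> w \<and> v \<noteq> w \<and>
            perm3 (u, v, w) x \<and>
            ((Xi cmp e u = {(u, v), (u, w)} \<and> Xi_pair cmp e v w) \<or>
             (Xi cmp e u = {(u, v), (u, w)} \<and> base_pair cmp e v w) \<or>
             (base_pair cmp e u v \<and> base_pair cmp e u w \<and> base_pair cmp e v w)))
      \<or> (\<exists>u\<in>sU cmp e. \<exists>v\<in>sU cmp e. u \<noteq> v \<and> perm3 (u, u, v) x \<and>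
            (Xi_pair cmp e u v \<or> base_pair cmp e u v))
      \<or> (\<exists>u\<in>sU cmp e. perm3 (u, u, u) x)"

lemma G_vi: "u \<in> sU cmp e \<Longrightarrow> perm3 (u, u, u) x \<Longrightarrow> GOAL cmp e x"
  unfolding GOAL_def by (rule disjI2, rule disjI2, rule bexI)

lemma G_iv: "u \<in> sU cmp e \<Longrightarrow> v \<in> sU cmp e \<Longrightarrow> u \<noteq> v \<Longrightarrow> perm3 (u, u, v) x \<Longrightarrow>
   Xi_pair cmp e u v \<or> base_pair cmp e u v \<Longrightarrow> GOAL cmp e x"
  unfolding GOAL_def apply (rule disjI2, rule disjI1) by (intro bexI conjI)

lemma G_iii: "u \<in> sU cmp e \<Longrightarrow> v \<in> sU cmp e \<Longrightarrow> w \<in> sU cmp e \<Longrightarrow> u \<noteq> v \<Longrightarrow> u \<noteq> w \<Longrightarrow> v \<noteq> w \<Longrightarrow>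
   perm3 (u, v, w) x \<Longrightarrow>
   ((Xi cmp e u = {(u, v), (u, w)} \<and> Xi_pair cmp e v w) \<or>
             (Xi cmp e u = {(u, v), (u, w)} \<and> base_pair cmp e v w) \<or>
             (base_pair cmp e u v \<and> base_pair cmp e u w \<and> base_pair cmp e v w)) \<Longrightarrow> GOAL cmp e x"
  unfolding GOAL_def apply (rule disjI1) by (intro bexI conjI)

lemma perm3_lem: "(i::nat) < 3 \<Longrightarrow> j < 3 \<Longrightarrow> k < 3 \<Longrightarrow> distinct [i, j, k] \<Longrightarrow> f i = u \<Longrightarrow> f j = v \<Longrightarrow> f k = w \<Longrightarrow>
   perm3 (u, v, w) (f 0, f 1, f 2)"
  using less3[of i] less3[of j] less3[of k] unfolding perm3_def by auto

lemma main_nobt: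
  assumes W: "WA cmp conv e" and pT: "p \<in> Tr cmp" and nb: "nobt p"
  shows "GOAL cmp e (cls cmp e (setptr p 0), cls cmp e (setptr p 1), cls cmp e (setptr p 2))"
proof -
  define c where "c n = cls cmp e (setptr p n)" for n
  have cU: "\<And>n. n < 3 \<Longrightarrow> c n \<in> sU cmp e"
    unfolding c_def sU_def using pT trl_setptr Tr_trl by blast
  have tq: "trl cmp p" using pT Tr_trl by blast
  then have ne: "p \<noteq> []" by auto
  have "GOAL cmp e (c 0, c 1, c 2)"
  proof (cases "length p = 1")
    case True
    then obtain t k where q: "p = [(t, k)]" by (cases p rule: edges.cases) auto
    have t: "t \<in> sB cmp" using tq q by simp
    have cc: "c n = cls cmp e [(t, n)]" for n unfolding c_def q by (simp add: setptr_def)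
    have P: "\<And>a b. a < 3 \<Longrightarrow> b < 3 \<Longrightarrow> a \<noteq> b \<Longrightarrow> c a = c b \<or> base_pair cmp e (c a) (c b)"
      unfolding cc using len1_pair[OF W t] by blast
    have U: "c 0 \<in> sU cmp e" "c 1 \<in> sU cmp e" "c 2 \<in> sU cmp e" using cU by simp_all
    show ?thesis
    proof (cases "c 0 = c 1")
      case T01: True
      show ?thesis
      proof (cases "c 1 = c 2")
        case True
        have "perm3 (c 0, c 0, c 0) (c 0, c 1, c 2)" using perm3_lem[of 0 1 2 c] T01 True by simp
        then show ?thesis using U G_vi by blast
      next
        case False
        have "perm3 (c 0, c 0, c 2) (c 0, c 1, c 2)" using perm3_lem[of 0 1 2 c] T01 by simp
        moreover have "base_pair cmp e (c 0) (c 2)" using P[of 0 2] T01 False by auto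
        ultimately show ?thesis using U T01 False G_iv[of "c 0" cmp e "c 2"] by auto
      qed
    next
      case F01: False
      show ?thesis
      proof (cases "c 0 = c 2")
        case True
        have "perm3 (c 0, c 0, c 1) (c 0, c 1, c 2)" using perm3_lem[of 0 2 1 c] True by simp
        moreover have "base_pair cmp e (c 0) (c 1)" using P[of 0 1] F01 by auto
        ultimately show ?thesis using U F01 G_iv[of "c 0" cmp e "c 1"] by auto
      next
        case F02: False
        show ?thesis
        proof (cases "c 1 = c 2")
          case True
          have "perm3 (c 1, c 1, c 0) (c 0, c 1, c 2)" using perm3_lem[of 1 2 0 c] True by simp
          moreover have "base_pair cmp e (c 1) (c 0)" using P[of 1 0] F01 by auto
          ultimately show ?thesis using U F01 G_iv[of "c 1" cmp e "c 0"] by auto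
        next
          case False
          have "perm3 (c 0, c 1, c 2) (c 0, c 1, c 2)" using perm3_lem[of 0 1 2 c] by simp
          moreover have "base_pair cmp e (c 0) (c 1)" "base_pair cmp e (c 0) (c 2)" "base_pair cmp e (c 1) (c 2)"
            using P[of 0 1] P[of 0 2] P[of 1 2] F01 F02 False by auto
          ultimately show ?thesis using U F01 F02 False G_iii[of "c 0" cmp e "c 1" "c 2"] by auto
        qed
      qed
    qed
  next
    case False
    then have "length p \<ge> 2" using ne by (cases p) (auto simp: Suc_le_eq)
    then obtain r t' k' t k where q: "p = r @ [(t', k'), (t, k)]"
      by (metis (no_types, opaque_lifting) One_nat_def Suc_1 length_0_conv length_Suc_conv_rev not_less_eq_eq surj_pair
          zero_less_Suc rev_exhaust le_zero_eq length_append_singleton append.assoc append_Cons append_Nil)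
    have qT: "r @ [(t', k'), (t, k)] \<in> Tr cmp" and nb': "nobt (r @ [(t', k'), (t, k)])" using pT nb q by auto
    note B = l2_basic[OF W qT nb']
    define c' where "c' n = cls cmp e (setptr (r @ [(t', k')]) n)" for n
    have PL: "\<And>a b. a < 3 \<Longrightarrow> b < 3 \<Longrightarrow> a \<noteq> b \<Longrightarrow>
       c' a = c' b \<or> Xi_pair cmp e (c' a) (c' b) \<or> base_pair cmp e (c' a) (c' b)"
      unfolding c'_def using pairL[OF W B(1) B(2)] by blast
    have red: "\<And>n. n < 3 \<Longrightarrow> n \<noteq> k' \<Longrightarrow> c n = c' n"
      unfolding c_def c'_def q using l2_red[OF W qT nb'] by blast
    obtain l m where lm: "l < 3" "m < 3" "distinct [k', l, m]"
      using B(4) less3[of k'] by (metis distinct_length_2_or_more distinct_singleton less_numeral_extra(1)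
          one_less_numeral_iff semiring_norm(77) zero_less_numeral zero_neq_numeral numeral_One
          One_nat_def Suc_1 lessI less_Suc_eq numeral_3_eq_3 n_not_Suc_n zero_neq_one)
    have k3: "k' < 3" using B(4) .
    have lk: "l \<noteq> k'" "m \<noteq> k'" "l \<noteq> m" using lm by auto
    note U = cU[OF k3] cU[OF lm(1)] cU[OF lm(2)]
    have cl: "c l = c' l" and cm: "c m = c' m" using red lm lk by auto
    have allidx: "\<And>n. n < 3 \<Longrightarrow> n \<noteq> k' \<Longrightarrow> n = l \<or> n = m"
      using lm k3 less3 by (metis distinct_length_2_or_more)
    show ?thesis
    proof (cases "\<exists>\<nu><3. \<nu> \<noteq> k' \<and> t \<in> sE cmp e k' \<nu>")
      case True
      then obtain \<nu> where v: "\<nu> < 3" "\<nu> \<noteq> k'" "t \<in> sE cmp e k' \<nu>" by blast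
      have ck: "c k' = c \<nu>" using l2_E[OF W qT nb' v(1,3)] unfolding c_def q by simp
      have gen: "\<And>a b. distinct [k', a, b] \<Longrightarrow> a < 3 \<Longrightarrow> b < 3 \<Longrightarrow> c k' = c a \<Longrightarrow> GOAL cmp e (c 0, c 1, c 2)"
      proof -
        fix a b assume d: "distinct [k', a, b]" "a < 3" "b < 3" "c k' = c a"
        have ca: "c a = c' a" and cb: "c b = c' b" using red d by auto
        show "GOAL cmp e (c 0, c 1, c 2)"
        proof (cases "c a = c b")
          case True
          have "perm3 (c a, c a, c a) (c 0, c 1, c 2)" using perm3_lem[OF k3 d(2,3) d(1), of c] d(4) True by simp
          then show ?thesis using cU[OF d(2)] G_vi by blast
        next
          case False
          have "perm3 (c a, c a, c b) (c 0, c 1, c 2)" using perm3_lem[OF k3 d(2,3) d(1), of c] d(4) by simp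
          moreover have "Xi_pair cmp e (c a) (c b) \<or> base_pair cmp e (c a) (c b)"
            using PL[OF d(2,3)] d(1) ca cb False by auto
          ultimately show ?thesis using cU[OF d(2)] cU[OF d(3)] False G_iv[of "c a" cmp e "c b"] by auto
        qed
      qed
      show ?thesis
      proof (cases "\<nu> = l")
        case True then show ?thesis using gen[OF lm(3) lm(1) lm(2)] ck by simp
      next
        case False
        then have "\<nu> = m" using allidx v by blast
        moreover have "distinct [k', m, l]" using lm by auto
        ultimately show ?thesis using gen[OF _ lm(2) lm(1)] ck by simp
      qed
    next
      case False
      then have no: "\<forall>\<nu><3. \<nu> \<noteq> k' \<longrightarrow> t \<notin> sE cmp e k' \<nu>" by blast
      have Xi: "Xi cmp e (c k') = {(c k', c n) | n. n < 3 \<and> n \<noteq> k'}"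
        unfolding c_def q using l2_Xi[OF W qT nb' no] .
      then have Xi2: "Xi cmp e (c k') = {(c k', c l), (c k', c m)}"
        using allidx lm lk by auto
      have QT: "setptr p k' \<in> Tr cmp" using pT k3 trl_setptr Tr_trl by blast
      have Qr: "reduced cmp e (setptr p k')" using l2_reduced[OF W qT nb' no] q by simp
      have dist: "\<And>n. n < 3 \<Longrightarrow> n \<noteq> k' \<Longrightarrow> c k' \<noteq> c n"
      proof
        fix n assume n: "n < 3" "n \<noteq> k'" and eq: "c k' = c n"
        then have "cls cmp e (setptr p k') = cls cmp e (setptr (r @ [(t', k')]) n)"
          using red unfolding c_def c'_def by simp
        then have "(setptr p k', setptr (r @ [(t', k')]) n) \<in> approx cmp e"
          using cls_eq_iff[OF QT] by blast
        moreover have "setptr (r @ [(t', k')]) n \<in> Tr cmp" using B(1) n trl_setptr Tr_trl by blast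
        ultimately have "length (setptr p k') \<le> length (setptr (r @ [(t', k')]) n)"
          using reduced_shortest[OF W QT _ Qr] by blast
        then show False using l2_len[OF W qT nb', of n k'] q by simp
      qed
      have ul: "c k' \<noteq> c l" and um: "c k' \<noteq> c m" using dist lm lk by auto
      show ?thesis
      proof (cases "c l = c m")
        case True
        have "perm3 (c l, c l, c k') (c 0, c 1, c 2)"
          using perm3_lem[of l m k' c] lm k3 True by auto
        moreover have "Xi_pair cmp e (c l) (c k')" unfolding Xi_pair_def using Xi2 by blast
        ultimately show ?thesis using U ul G_iv[of "c l" cmp e "c k'"] by auto
      next
        case False
        have "perm3 (c k', c l, c m) (c 0, c 1, c 2)"
          using perm3_lem[of k' l m c] lm k3 by auto
        moreover have "Xi_pair cmp e (c l) (c m) \<or> base_pair cmp e (c l) (c m)"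
          using PL[OF lm(1,2) lk(3)] cl cm False by auto
        ultimately show ?thesis using U ul um False Xi2 G_iii[of "c k'" cmp e "c l" "c m"] by auto
      qed
    qed
  qed
  then show ?thesis unfolding c_def .
qed

theorem lemma9:
  fixes cmp :: "'a::complete_boolean_algebra \<Rightarrow> 'a \<Rightarrow> 'a"
    and conv :: "'a \<Rightarrow> 'a" and e :: 'a
    and x :: "('a list \<times> nat) list set \<times> ('a list \<times> nat) list set \<times> ('a list \<times> nat) list set"
  assumes "WA cmp conv e"
    and "atomic_ba TYPE('a)"
    and "x \<in> sV cmp e"
  shows "(\<exists>u\<in>sU cmp e. \<exists>v\<in>sU cmp e. \<exists>w\<in>sU cmp e. u \<noteq> v \<and> u \<noteq> w \<and> v \<noteq> w \<and>
            perm3 (u, v, w) x \<and>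
            ((Xi cmp e u = {(u, v), (u, w)} \<and> Xi_pair cmp e v w) \<or>
             (Xi cmp e u = {(u, v), (u, w)} \<and> base_pair cmp e v w) \<or>
             (base_pair cmp e u v \<and> base_pair cmp e u w \<and> base_pair cmp e v w)))
      \<or> (\<exists>u\<in>sU cmp e. \<exists>v\<in>sU cmp e. u \<noteq> v \<and> perm3 (u, u, v) x \<and>
            (Xi_pair cmp e u v \<or> base_pair cmp e u v))
      \<or> (\<exists>u\<in>sU cmp e. perm3 (u, u, u) x)"
proof -
  obtain p where pT: "p \<in> Tr cmp" and x: "x = (cls cmp e (setptr p 0), cls cmp e (setptr p 1), cls cmp e (setptr p 2))"
    using assms(3) unfolding sV_def by blast
  obtain p' where p': "p' \<in> Tr cmp" "nobt p'" "\<forall>l<3. cls cmp e (setptr p l) = cls cmp e (setptr p' l)"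
    using exists_nobt[OF pT] by blast
  have "x = (cls cmp e (setptr p' 0), cls cmp e (setptr p' 1), cls cmp e (setptr p' 2))"
    using x p'(3) by simp
  then have "GOAL cmp e x" using main_nobt[OF assms(1) p'(1,2)] by simp
  then show ?thesis unfolding GOAL_def .
qed


end
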